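(* Let $a,b\in\mathbb{Z}$ with $a<b$, $\mathbf{x}\in\mathbb{Z}^m$ with $x_1\le\dots\le x_m$, and $\mathbf{y}\in(\mathbb{Z}')^n$ with $y_1\le\dots\le y_n$, where $\mathbb{Z}'=\mathbb{Z}+1/2$. Let $\mathbf{X}=(X_1,\dots,X_m)$ be an $m$-dimensional simple coalescing random walk on $\mathbb{Z}$ started at $\mathbf{x}$ and absorbed at $a$ and at $b$, and let $\mathbf{Y}=(Y_1,\dots,Y_n)$ be an $n$-dimensional simple coalescing random walk on $\mathbb{Z}'$ started at $\mathbf{y}$ and reflected at $a$ and $b$. Put $I^{\rightarrow}_{ij}(t,\mathbf{y})=1_{]y_j,y_{j+1}]}(X_i(t))$ and $I^{\leftarrow}_{ij}(t,\mathbf{x})=1_{]Y_j(t),Y_{j+1}(t)]}(x_i)$ for $1\le i\le m$, $1\le j\le n-1$. Then for each $t\ge0$ the joint distribution of the $m\times(n-1)$ random array $(I^{\rightarrow}_{ij}(t,\mathbf{Y}(0)))$ coincides with that of $(I^{\leftarrow}_{ij}(t,\mathbf{X}(0)))$.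
   Context: A simple coalescing random walk on $\mathbb{Z}$ (resp. $\mathbb{Z}'$) is a system of particles indexed $1,\dots,m$ in increasing order of initial positions, each free particle performing a continuous-time symmetric simple random walk jumping at total rate one (rate $1/2$ to each neighbour), independently, except that particles that occupy the same site coalesce and move together thereafter. Absorbed at $a$ and $b$: a particle that hits $a$ or $b$ stays there forever (it no longer jumps). Reflected at $a$ (for the walk on $\mathbb{Z}'$): each particle stays on the same side of $a$; a particle at $a-1/2$ jumps to $a-3/2$ at rate $1/2$ and its jump to the right is suppressed (it stays), and symmetrically a particle at $a+1/2$ jumps to $a+3/2$ at rate $1/2$ and its jump to the left is suppressed; otherwise it moves as a simple coalescing random walk. Reflection at two points $a<b$ is defined analogously at each point. *)

theory Defs
  imports "HOL-Probability.Probability"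
begin

text \<open>
  Continuous-time coalescing random walks with bounded jump rates are encoded by
  uniformization: the law at time t of a Markov chain whose generator is
  lam * (K - Id), with K a jump kernel, is
  sum over k of Poisson(lam t){k} times K^k (the matrix exponential exp(t Q)).
  Each of the m particle indices carries a rate-one clock; when the clock of index i
  rings, the cluster containing i (all particles at the same site) moves, but only if
  i is the least index of that cluster.  Hence each cluster jumps at total rate one,
  rate 1/2 to each neighbour, independently of other clusters.
\<close>

fun kernel_power :: "('s \<Rightarrow> 's pmf) \<Rightarrow> nat \<Rightarrow> 's \<Rightarrow> 's pmf" where
  "kernel_power K 0 s = return_pmf s"
| "kernel_power K (Suc k) s = bind_pmf (K s) (kernel_power K k)"

definition uniformized_law :: "real \<Rightarrow> ('s \<Rightarrow> 's pmf) \<Rightarrow> real \<Rightarrow> 's \<Rightarrow> 's pmf" where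
  "uniformized_law lam K t s =
     (if 0 < lam * t then bind_pmf (poisson_pmf (lam * t)) (\<lambda>k. kernel_power K k s)
      else return_pmf s)"

definition cluster_leader :: "'a list \<Rightarrow> nat \<Rightarrow> bool" where
  "cluster_leader xs i \<longleftrightarrow> (\<forall>j<i. xs ! j \<noteq> xs ! i)"

definition move_cluster :: "'a list \<Rightarrow> nat \<Rightarrow> 'a \<Rightarrow> 'a list" where
  "move_cluster xs i q = map (\<lambda>z. if z = xs ! i then q else z) xs"

definition crw_step :: "('a \<Rightarrow> int \<Rightarrow> 'a) \<Rightarrow> 'a list \<Rightarrow> 'a list pmf" where
  "crw_step jump xs =
     (if xs = [] then return_pmf xs else
      bind_pmf (pmf_of_set {0..<length xs}) (\<lambda>i.
      bind_pmf (pmf_of_set {-1, 1 :: int}) (\<lambda>d.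
        return_pmf (if cluster_leader xs i
                    then move_cluster xs i (jump (xs ! i) d) else xs))))"

definition crw_law :: "('a \<Rightarrow> int \<Rightarrow> 'a) \<Rightarrow> real \<Rightarrow> 'a list \<Rightarrow> 'a list pmf" where
  "crw_law jump t xs = uniformized_law (real (length xs)) (crw_step jump) t xs"

definition absorbed_jump :: "int \<Rightarrow> int \<Rightarrow> int \<Rightarrow> int \<Rightarrow> int" where
  "absorbed_jump a b x d = (if x = a \<or> x = b then x else x + d)"

text \<open>Single-site dynamics on Z' = Z + 1/2 (positions as reals) reflected at a and b:
  a jump that would cross a or b is suppressed.\<close>
definition reflected_jump :: "int \<Rightarrow> int \<Rightarrow> real \<Rightarrow> int \<Rightarrow> real" where
  "reflected_jump a b y d =
     (let y' = y + of_int d in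
      if (y < of_int a) \<noteq> (y' < of_int a) \<or> (y < of_int b) \<noteq> (y' < of_int b) then y else y')"

definition absorbed_crw_law :: "int \<Rightarrow> int \<Rightarrow> real \<Rightarrow> int list \<Rightarrow> int list pmf" where
  "absorbed_crw_law a b t xs = crw_law (absorbed_jump a b) t xs"

definition reflected_crw_law :: "int \<Rightarrow> int \<Rightarrow> real \<Rightarrow> real list \<Rightarrow> real list pmf" where
  "reflected_crw_law a b t ys = crw_law (reflected_jump a b) t ys"

text \<open>The m x (n-1) array I_ij = 1_{]y_j, y_(j+1)]}(x_i) (0-based indices, as booleans).\<close>
definition interval_array :: "int list \<Rightarrow> real list \<Rightarrow> bool list list" where
  "interval_array xs ys =
     map (\<lambda>x. map (\<lambda>j. of_int x \<in> {ys ! j <.. ys ! (j+1)}) [0..<length ys - 1]) xs"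

end

theory Submission
  imports Defs
begin


definition lazy :: "real \<Rightarrow> ('s \<Rightarrow> 's pmf) \<Rightarrow> 's \<Rightarrow> 's pmf" where
  "lazy p K x = bind_pmf (bernoulli_pmf p) (\<lambda>b. if b then K x else return_pmf x)"

lemma kp0: "kernel_power K 0 = return_pmf" by (rule ext) simp

lemma kp_Suc': "kernel_power K (Suc k) s = bind_pmf (kernel_power K k s) K"
proof (induction k arbitrary: s)
  case 0 show ?case by (simp add: kp0 bind_return_pmf bind_return_pmf')
next
  case (Suc k)
  have "kernel_power K (Suc (Suc k)) s = K s \<bind> (\<lambda>z. kernel_power K k z \<bind> K)"
    by (simp only: kernel_power.simps, rule bind_pmf_cong[OF refl], rule Suc.IH)
  then show ?case by (simp add: bind_assoc_pmf)
qed

lemma kp_lazy: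
  assumes "0 \<le> p" "p \<le> 1"
  shows "kernel_power (lazy p K) k x = bind_pmf (binomial_pmf k p) (\<lambda>j. kernel_power K j x)"
proof (induction k arbitrary: x)
  case 0 then show ?case using assms by (simp add: binomial_pmf_0[of p] bind_return_pmf)
next
  case (Suc k)
  have "kernel_power (lazy p K) (Suc k) x = bind_pmf (lazy p K x) (\<lambda>z. bind_pmf (binomial_pmf k p) (\<lambda>j. kernel_power K j z))"
    by (simp, rule bind_pmf_cong[OF refl], rule Suc.IH)
  also have "\<dots> = bind_pmf (bernoulli_pmf p) (\<lambda>b. bind_pmf (binomial_pmf k p) (\<lambda>j. kernel_power K ((if b then 1 else 0) + j) x))"
    unfolding lazy_def bind_assoc_pmf
  proof (rule bind_pmf_cong[OF refl])
    fix b show "(if b then K x else return_pmf x) \<bind> (\<lambda>z. binomial_pmf k p \<bind> (\<lambda>j. kernel_power K j z)) =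
         binomial_pmf k p \<bind> (\<lambda>j. kernel_power K ((if b then 1 else 0) + j) x)"
      by (cases b) (simp_all add: bind_return_pmf, subst bind_commute_pmf, simp)
  qed
  also have "\<dots> = bind_pmf (binomial_pmf (Suc k) p) (\<lambda>j. kernel_power K j x)"
    using assms by (simp add: binomial_pmf_Suc bind_assoc_pmf bind_return_pmf)
  finally show ?case .
qed

lemma nn_swap_pmf:
  "bind_pmf M (\<lambda>x. bind_pmf N (\<lambda>y. F x y)) = bind_pmf N (\<lambda>y. bind_pmf M (\<lambda>x. F x y))"
  by (rule bind_commute_pmf)

lemma poisson_thin:
  assumes lam: "0 < lam" and p: "0 < p" "p \<le> 1"
  shows "bind_pmf (poisson_pmf lam) (\<lambda>k. binomial_pmf k p) = poisson_pmf (p*lam)"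
proof (rule pmf_eqI)
  fix j
  define f where "f k = lam ^ k / fact k * exp (-lam) * (real (k choose j) * p ^ j * (1 - p) ^ (k - j))" for k
  have f0: "\<And>k. 0 \<le> f k" using lam p by (auto simp: f_def)
  have fs: "(\<lambda>i. f (i + j)) = (\<lambda>i. (exp (-lam) * (p*lam)^j / fact j) * (((1-p)*lam)^i /\<^sub>R fact i))"
  proof
    fix i
    have C: "real ((i + j) choose j) = fact (i+j) / (fact j * fact i)"
      by (subst binomial_fact) auto
    have P: "(lam - lam * p) ^ i = lam ^ i * (1 - p) ^ i"
    proof -
      have "lam - lam * p = lam * (1 - p)" by (simp add: algebra_simps)
      then show ?thesis by (simp add: power_mult_distrib)
    qed
    then show "f (i + j) = (exp (-lam) * (p*lam)^j / fact j) * (((1-p)*lam)^i /\<^sub>R fact i)"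
      unfolding f_def by (simp only: C) (simp add: field_simps power_add power_mult_distrib P)
  qed
  have "(\<lambda>i. f (i + j)) sums ((exp (-lam) * (p*lam)^j / fact j) * exp ((1-p)*lam))"
    unfolding fs by (rule sums_mult) (rule exp_converges)
  then have "f sums ((exp (-lam) * (p*lam)^j / fact j) * exp ((1-p)*lam))"
    by (subst (asm) sums_zero_iff_shift) (auto simp: f_def)
  moreover have "(exp (-lam) * (p*lam)^j / fact j) * exp ((1-p)*lam) = (p*lam)^j / fact j * exp (-(p*lam))"
  proof -
    have "exp (-lam) * exp ((1-p)*lam) = exp (-(p*lam))"
    proof -
      have e: "-lam + (1-p)*lam = -(p*lam)" by (simp add: algebra_simps)
      show ?thesis by (simp only: mult_exp_exp e)
    qed
    then show ?thesis by (metis (no_types, lifting) mult.commute mult.left_commute times_divide_eq_right)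
  qed
  ultimately have fsum: "f sums ((p*lam)^j / fact j * exp (-(p*lam)))" by metis
  have "ennreal (pmf (bind_pmf (poisson_pmf lam) (\<lambda>k. binomial_pmf k p)) j)
      = (\<integral>\<^sup>+k. ennreal (pmf (poisson_pmf lam) k) * ennreal (pmf (binomial_pmf k p) j) \<partial>count_space UNIV)"
    by (simp add: ennreal_pmf_bind nn_integral_measure_pmf)
  also have "\<dots> = (\<Sum>k. ennreal (f k))"
    using lam p by (simp add: nn_integral_count_space_nat f_def ennreal_mult'[symmetric])
  also have "\<dots> = ennreal ((p*lam)^j / fact j * exp (-(p*lam)))"
    by (rule suminf_ennreal_eq[OF f0 fsum])
  also have "\<dots> = ennreal (pmf (poisson_pmf (p*lam)) j)"
    using lam p by simp
  finally show "pmf (bind_pmf (poisson_pmf lam) (\<lambda>k. binomial_pmf k p)) j = pmf (poisson_pmf (p*lam)) j"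
    using lam p by (subst (asm) ennreal_inj) auto
qed

lemma binomial_pmf_p0: "binomial_pmf k 0 = return_pmf 0"
  by (subst set_pmf_subset_singleton[symmetric]) simp

lemma unif_thin:
  assumes "0 \<le> l" "l \<le> L" "0 < L" "0 \<le> t"
  shows "uniformized_law l K t x = uniformized_law L (lazy (l/L) K) t x"
proof (cases "t = 0")
  case True then show ?thesis by (simp add: uniformized_law_def)
next
  case False
  then have t: "0 < t" using assms by simp
  have p: "0 \<le> l/L" "l/L \<le> 1" using assms by auto
  show ?thesis
  proof (cases "l = 0")
    case True
    have "uniformized_law L (lazy (l/L) K) t x = bind_pmf (poisson_pmf (L*t)) (\<lambda>k. return_pmf x)"
      using t assms True unfolding uniformized_law_def
      by (simp add: kp_lazy binomial_pmf_p0 bind_return_pmf)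
    also have "\<dots> = return_pmf x" by (simp add: bind_pmf_const)
    finally show ?thesis using True by (simp add: uniformized_law_def)
  next
    case False
    then have l: "0 < l" using assms by simp
    have "uniformized_law L (lazy (l/L) K) t x =
       bind_pmf (poisson_pmf (L*t)) (\<lambda>k. bind_pmf (binomial_pmf k (l/L)) (\<lambda>j. kernel_power K j x))"
      using t assms unfolding uniformized_law_def by (simp add: kp_lazy[OF p])
    also have "\<dots> = bind_pmf (bind_pmf (poisson_pmf (L*t)) (\<lambda>k. binomial_pmf k (l/L))) (\<lambda>j. kernel_power K j x)"
      by (simp add: bind_assoc_pmf)
    also have "bind_pmf (poisson_pmf (L*t)) (\<lambda>k. binomial_pmf k (l/L)) = poisson_pmf (l/L*(L*t))"
      by (rule poisson_thin) (use t assms l in auto)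
    also have "l/L*(L*t) = l*t" using assms by simp
    finally show ?thesis using l t by (simp add: uniformized_law_def)
  qed
qed

lemma kp_inv:
  assumes "\<And>x. x \<in> S \<Longrightarrow> set_pmf (K x) \<subseteq> S"
  shows "x \<in> S \<Longrightarrow> set_pmf (kernel_power K k x) \<subseteq> S"
proof (induction k arbitrary: x)
  case 0 then show ?case by simp
next
  case (Suc k) then show ?case using assms by (fastforce simp: set_bind_pmf)
qed

lemma kp_duality:
  assumes inv1: "\<And>x. x \<in> S1 \<Longrightarrow> set_pmf (K1 x) \<subseteq> S1"
      and inv2: "\<And>y. y \<in> S2 \<Longrightarrow> set_pmf (K2 y) \<subseteq> S2"
      and dual: "\<And>x y. x \<in> S1 \<Longrightarrow> y \<in> S2 \<Longrightarrow>
                   map_pmf (\<lambda>x'. g x' y) (K1 x) = map_pmf (\<lambda>y'. g x y') (K2 y)"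
  shows "x \<in> S1 \<Longrightarrow> y \<in> S2 \<Longrightarrow>
    map_pmf (\<lambda>x'. g x' y) (kernel_power K1 k x) = map_pmf (\<lambda>y'. g x y') (kernel_power K2 k y)"
proof (induction k arbitrary: x y)
  case 0 then show ?case by simp
next
  case (Suc k)
  have "map_pmf (\<lambda>x'. g x' y) (kernel_power K1 (Suc k) x)
      = bind_pmf (K1 x) (\<lambda>x1. map_pmf (\<lambda>x'. g x' y) (kernel_power K1 k x1))"
    by (simp add: map_bind_pmf)
  also have "\<dots> = bind_pmf (K1 x) (\<lambda>x1. map_pmf (\<lambda>y'. g x1 y') (kernel_power K2 k y))"
    using Suc.IH Suc.prems inv1 by (intro bind_pmf_cong) auto
  also have "\<dots> = bind_pmf (kernel_power K2 k y) (\<lambda>y'. map_pmf (\<lambda>x1. g x1 y') (K1 x))"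
    unfolding map_pmf_def by (rule bind_commute_pmf)
  also have "\<dots> = bind_pmf (kernel_power K2 k y) (\<lambda>y'. map_pmf (\<lambda>y''. g x y'') (K2 y'))"
  proof (rule bind_pmf_cong[OF refl])
    fix y' assume "y' \<in> set_pmf (kernel_power K2 k y)"
    moreover have "set_pmf (kernel_power K2 k y) \<subseteq> S2"
      by (rule kp_inv[of S2 K2]) (use inv2 Suc.prems in auto)
    ultimately show "map_pmf (\<lambda>x1. g x1 y') (K1 x) = map_pmf (\<lambda>y''. g x y'') (K2 y')"
      using dual Suc.prems by auto
  qed
  also have "\<dots> = map_pmf (\<lambda>y'. g x y') (kernel_power K2 (Suc k) y)"
    by (simp only: kp_Suc' map_bind_pmf)
  finally show ?case .
qed

lemma unif_duality:
  assumes inv1: "\<And>x. x \<in> S1 \<Longrightarrow> set_pmf (K1 x) \<subseteq> S1"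
      and inv2: "\<And>y. y \<in> S2 \<Longrightarrow> set_pmf (K2 y) \<subseteq> S2"
      and dual: "\<And>x y. x \<in> S1 \<Longrightarrow> y \<in> S2 \<Longrightarrow>
                   map_pmf (\<lambda>x'. g x' y) (K1 x) = map_pmf (\<lambda>y'. g x y') (K2 y)"
      and xy: "x \<in> S1" "y \<in> S2"
  shows "map_pmf (\<lambda>x'. g x' y) (uniformized_law L K1 t x) = map_pmf (\<lambda>y'. g x y') (uniformized_law L K2 t y)"
  unfolding uniformized_law_def
  using kp_duality[OF inv1 inv2 dual xy]
  by (auto simp: map_bind_pmf intro!: bind_pmf_cong)




lemma leaders_bij:
  "bij_betw (nth X) {i. i < length X \<and> cluster_leader X i} (set X)"
proof (rule bij_betwI')
  fix i j assume i: "i \<in> {i. i < length X \<and> cluster_leader X i}" and j: "j \<in> {i. i < length X \<and> cluster_leader X i}"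
  show "(X ! i = X ! j) = (i = j)"
  proof
    assume e: "X ! i = X ! j"
    show "i = j"
    proof (rule ccontr)
      assume "i \<noteq> j"
      then have "i < j \<or> j < i" by arith
      then show False using i j e unfolding cluster_leader_def by auto
    qed
  qed simp
next
  fix i assume "i \<in> {i. i < length X \<and> cluster_leader X i}"
  then show "X ! i \<in> set X" by auto
next
  fix p assume p: "p \<in> set X"
  define i where "i = (LEAST i. i < length X \<and> X ! i = p)"
  have ex: "\<exists>i. i < length X \<and> X ! i = p" using p by (simp add: in_set_conv_nth)
  have i: "i < length X \<and> X ! i = p" unfolding i_def by (rule LeastI_ex[OF ex])
  have "cluster_leader X i" unfolding cluster_leader_def
  proof (intro allI impI)
    fix j assume "j < i"
    then have "\<not> (j < length X \<and> X ! j = p)" unfolding i_def by (rule not_less_Least)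
    then show "X ! j \<noteq> X ! i" using i \<open>j < i\<close> by auto
  qed
  then show "\<exists>i\<in>{i. i < length X \<and> cluster_leader X i}. p = X ! i" using i by auto
qed

definition stp :: "('a \<Rightarrow> int \<Rightarrow> 'a) \<Rightarrow> nat \<Rightarrow> int \<Rightarrow> 'a list \<Rightarrow> 'a list" where
  "stp jump i d X = (if cluster_leader X i then move_cluster X i (jump (X ! i) d) else X)"

lemma step_sum:
  fixes g :: "'a list \<Rightarrow> real"
  shows "(\<Sum>i\<in>{0..<length X}. \<Sum>d\<in>{-1,1::int}. g (stp jump i d X) - g X)
       = (\<Sum>p\<in>set X. \<Sum>d\<in>{-1,1::int}. g (map (\<lambda>z. if z = p then jump p d else z) X) - g X)"
proof -
  have "(\<Sum>i\<in>{0..<length X}. \<Sum>d\<in>{-1,1::int}. g (stp jump i d X) - g X)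
      = (\<Sum>i\<in>{i. i < length X \<and> cluster_leader X i}. \<Sum>d\<in>{-1,1::int}. g (stp jump i d X) - g X)"
    by (rule sum.mono_neutral_right) (auto simp: stp_def)
  also have "\<dots> = (\<Sum>i\<in>{i. i < length X \<and> cluster_leader X i}.
        (\<lambda>p. \<Sum>d\<in>{-1,1::int}. g (map (\<lambda>z. if z = p then jump p d else z) X) - g X) (X ! i))"
    by (rule sum.cong) (auto simp: stp_def move_cluster_def)
  also have "\<dots> = (\<Sum>p\<in>set X. \<Sum>d\<in>{-1,1::int}. g (map (\<lambda>z. if z = p then jump p d else z) X) - g X)"
    by (rule sum.reindex_bij_betw[OF leaders_bij])
  finally show ?thesis .
qed

lemma pmf_crw_step:
  "real (length X) * pmf (map_pmf f (crw_step jump X)) z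
    = (\<Sum>i\<in>{0..<length X}. \<Sum>d\<in>{-1,1::int}. indicator {z} (f (stp jump i d X))) / 2"
proof (cases "X = []")
  case True then show ?thesis by simp
next
  case False
  have "pmf (map_pmf f (crw_step jump X)) z
     = (\<Sum>i\<in>{0..<length X}. (\<Sum>d\<in>{-1,1::int}. indicator {z} (f (stp jump i d X))) / 2) / real (length X)"
    using False unfolding crw_step_def stp_def
    by (simp add: map_bind_pmf pmf_bind integral_pmf_of_set sum_divide_distrib[symmetric])
  then show ?thesis using False by (simp add: sum_divide_distrib[symmetric])
qed

lemma pmf_lazy:
  assumes "0 \<le> p" "p \<le> 1"
  shows "pmf (map_pmf f (lazy p K x)) z = p * pmf (map_pmf f (K x)) z + (1 - p) * indicator {z} (f x)"
  using assms unfolding lazy_def by (simp add: map_bind_pmf pmf_bind)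




lemma h1: "(of_int k + 1/2 < (of_int z::real)) = (k < z)"
proof
  assume "of_int k + 1/2 < (of_int z::real)" then have "of_int k < (of_int z::real)" by linarith
  then show "k < z" by simp
next
  assume "k < z" then have "k + 1 \<le> z" by simp
  then have "of_int k + 1 \<le> (of_int z::real)" by (metis of_int_add of_int_le_iff of_int_1)
  then show "of_int k + 1/2 < (of_int z::real)" by linarith
qed

lemma h2: "((of_int z::real) \<le> of_int k + 1/2) = (z \<le> k)"
  using h1[of k z] by linarith

lemma rj_half:
  "reflected_jump a b (of_int k + 1/2) e
     = of_int (if (k < a) \<noteq> (k + e < a) \<or> (k < b) \<noteq> (k + e < b) then k else k + e) + 1/2"
proof -
  have e: "of_int k + 1/2 + of_int e = (of_int (k + e) + 1/2 :: real)" by simp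
  have h: "(of_int k + 1/2 < (of_int z::real)) = (k < z)" for k z by (rule h1)
  show ?thesis unfolding reflected_jump_def Let_def e h by (auto simp: algebra_simps)
qed

lemma psi_half:
  assumes d: "d \<in> {-1, 1::int}"
  shows "(if of_int k + 1/2 = (of_int p + of_int d / 2 :: real) then reflected_jump a b (of_int k + 1/2) (-d) else of_int k + 1/2)
     = of_int (if (d = 1 \<and> k = p) \<or> (d = -1 \<and> k = p - 1) then
          (if (k < a) \<noteq> (k - d < a) \<or> (k < b) \<noteq> (k - d < b) then k else k - d) else k) + 1/2"
proof -
  have eq: "(of_int k + 1/2 = (of_int p + of_int d / 2 :: real)) = ((d = 1 \<and> k = p) \<or> (d = -1 \<and> k = p - 1))"
  proof (cases "d = 1")
    case True then show ?thesis by (auto simp: field_simps)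
  next
    case False then have "d = -1" using d by auto
    then show ?thesis by (auto simp: field_simps)
  qed
  show ?thesis unfolding eq rj_half by auto
qed

lemma cmp:
  fixes x p k d a b :: int
  assumes d: "d \<in> {-1,1}"
  defines "\<phi> \<equiv> (\<lambda>z. if z = p then absorbed_jump a b p d else z)"
  and "\<psi> \<equiv> (\<lambda>w::real. if w = of_int p + of_int d/2 then reflected_jump a b w (-d) else w)"
  shows "(of_int k + 1/2 < (of_int (\<phi> x) :: real)) = (\<psi> (of_int k + 1/2) < of_int x)"
    and "((of_int (\<phi> x) :: real) \<le> of_int k + 1/2) = (of_int x \<le> \<psi> (of_int k + 1/2))"
proof -
  have P: "\<psi> (of_int k + 1/2) = of_int (if (d = 1 \<and> k = p) \<or> (d = -1 \<and> k = p - 1) then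
          (if (k < a) \<noteq> (k - d < a) \<or> (k < b) \<noteq> (k - d < b) then k else k - d) else k) + 1/2"
    unfolding \<psi>_def by (rule psi_half[OF d])
  have I: "(k < \<phi> x) = ((if (d = 1 \<and> k = p) \<or> (d = -1 \<and> k = p - 1) then
          (if (k < a) \<noteq> (k - d < a) \<or> (k < b) \<noteq> (k - d < b) then k else k - d) else k) < x)"
    using d unfolding \<phi>_def absorbed_jump_def by auto
  show "(of_int k + 1/2 < (of_int (\<phi> x) :: real)) = (\<psi> (of_int k + 1/2) < of_int x)"
    unfolding P h1 using I by simp
  show "((of_int (\<phi> x) :: real) \<le> of_int k + 1/2) = (of_int x \<le> \<psi> (of_int k + 1/2))"
    unfolding P h2 using I by auto
qed

lemma cmp_half:
  fixes x p d a b :: int and y :: real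
  assumes d: "d \<in> {-1,1}" and y: "y - 1/2 \<in> \<int>"
  shows "(y < (of_int (if x = p then absorbed_jump a b p d else x) :: real))
          = ((if y = of_int p + of_int d/2 then reflected_jump a b y (-d) else y) < of_int x)"
    and "((of_int (if x = p then absorbed_jump a b p d else x) :: real) \<le> y)
          = (of_int x \<le> (if y = of_int p + of_int d/2 then reflected_jump a b y (-d) else y))"
proof -
  obtain k where k: "y - 1/2 = of_int k" using y by (auto elim: Ints_cases)
  then have yk: "y = of_int k + 1/2" by simp
  show "(y < (of_int (if x = p then absorbed_jump a b p d else x) :: real))
          = ((if y = of_int p + of_int d/2 then reflected_jump a b y (-d) else y) < of_int x)"
    unfolding yk by (rule cmp(1)[OF d])
  show "((of_int (if x = p then absorbed_jump a b p d else x) :: real) \<le> y)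
          = (of_int x \<le> (if y = of_int p + of_int d/2 then reflected_jump a b y (-d) else y))"
    unfolding yk by (rule cmp(2)[OF d])
qed

lemma arr_dual:
  assumes d: "d \<in> {-1,1}" and Y: "\<forall>y\<in>set Y. y - 1/2 \<in> \<int>"
  shows "interval_array (map (\<lambda>z. if z = p then absorbed_jump a b p d else z) X) Y
       = interval_array X (map (\<lambda>w. if w = of_int p + of_int d/2 then reflected_jump a b w (-d) else w) Y)"
  unfolding interval_array_def map_map length_map o_def
proof (rule map_cong[OF refl], rule map_cong[OF refl])
  fix x j assume "j \<in> set [0..<length Y - 1]"
  then have j: "j < length Y" "j + 1 < length Y" by auto
  then have hj: "Y ! j - 1/2 \<in> \<int>" "Y ! (j+1) - 1/2 \<in> \<int>" using Y by auto
  show "(of_int (if x = p then absorbed_jump a b p d else x) \<in> {Y ! j<..Y ! (j + 1)})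
      = (of_int x \<in> {map (\<lambda>w. if w = of_int p + of_int d/2 then reflected_jump a b w (-d) else w) Y ! j<..
             map (\<lambda>w. if w = of_int p + of_int d/2 then reflected_jump a b w (-d) else w) Y ! (j + 1)})"
    unfolding greaterThanAtMost_iff nth_map[OF j(1)] nth_map[OF j(2)]
      cmp_half(1)[OF d hj(1), where x=x and a=a and b=b and p=p]
      cmp_half(2)[OF d hj(2), where x=x and a=a and b=b and p=p] ..
qed




lemma comb:
  fixes X :: "int list" and Y :: "real list" and g :: "int list \<Rightarrow> real list \<Rightarrow> real"
  assumes Y: "\<forall>y\<in>set Y. y - 1/2 \<in> \<int>"
  assumes g: "g = (\<lambda>X' Y'. indicator {z} (interval_array X' Y'))"
  shows "(\<Sum>p\<in>set X. \<Sum>d\<in>{-1,1::int}. g (map (\<lambda>w. if w = p then absorbed_jump a b p d else w) X) Y - g X Y)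
      = (\<Sum>q\<in>set Y. \<Sum>e\<in>{-1,1::int}. g X (map (\<lambda>w. if w = q then reflected_jump a b q e else w) Y) - g X Y)"
proof -
  define D where "D = {-1,1::int}"
  define T where "T p d = g (map (\<lambda>w. if w = p then absorbed_jump a b p d else w) X) Y - g X Y" for p d
  define T' where "T' q e = g X (map (\<lambda>w. if w = q then reflected_jump a b q e else w) Y) - g X Y" for q e
  define \<tau> where "\<tau> = (\<lambda>(p::int,d::int). (of_int p + of_int d / 2 :: real, -d))"
  define F where "F = set X \<union> (\<lambda>y. \<lfloor>y\<rfloor>) ` set Y \<union> (\<lambda>y. \<lfloor>y\<rfloor> + 1) ` set Y"
  have fin: "finite F" "finite D" unfolding F_def D_def by auto
  have "(\<Sum>p\<in>set X. \<Sum>d\<in>D. T p d) = (\<Sum>p\<in>F. \<Sum>d\<in>D. T p d)"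
  proof (rule sum.mono_neutral_left[OF fin(1)])
    show "set X \<subseteq> F" unfolding F_def by auto
    show "\<forall>p\<in>F - set X. (\<Sum>d\<in>D. T p d) = 0"
    proof
      fix p assume "p \<in> F - set X"
      then have "\<And>d. map (\<lambda>w. if w = p then absorbed_jump a b p d else w) X = X"
        by (intro map_idI) auto
      then show "(\<Sum>d\<in>D. T p d) = 0" unfolding T_def by simp
    qed
  qed
  also have "\<dots> = (\<Sum>x\<in>F \<times> D. T (fst x) (snd x))"
    by (simp add: sum.cartesian_product case_prod_beta)
  also have "\<dots> = (\<Sum>x\<in>F \<times> D. T' (fst (\<tau> x)) (snd (\<tau> x)))"
  proof (rule sum.cong[OF refl])
    fix x assume x: "x \<in> F \<times> D"
    obtain p d where pd: "x = (p, d)" by (cases x)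
    have d: "d \<in> {-1,1}" using x pd D_def by auto
    have m: "(\<lambda>w. if w = of_int p + of_int d / 2 then reflected_jump a b (of_int p + of_int d / 2) (-d) else w)
        = (\<lambda>w. if w = of_int p + of_int d / 2 then reflected_jump a b w (-d) else w)"
      by auto
    have tt: "\<tau> (p, d) = (of_int p + of_int d / 2, -d)" unfolding \<tau>_def by simp
    have "T p d = T' (of_int p + of_int d / 2) (-d)"
      unfolding T_def T'_def m using arr_dual[OF d Y, of p a b X] by (simp add: g)
    then show "T (fst x) (snd x) = T' (fst (\<tau> x)) (snd (\<tau> x))"
      unfolding pd tt by simp
  qed
  also have "\<dots> = (\<Sum>y\<in>\<tau> ` (F \<times> D). T' (fst y) (snd y))"
  proof (rule sum.reindex[symmetric, unfolded o_def])
    show "inj_on \<tau> (F \<times> D)" unfolding \<tau>_def inj_on_def by auto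
  qed
  also have "\<dots> = (\<Sum>y\<in>set Y \<times> D. T' (fst y) (snd y))"
  proof (rule sum.mono_neutral_right)
    show "finite (\<tau> ` (F \<times> D))" using fin by auto
    show "set Y \<times> D \<subseteq> \<tau> ` (F \<times> D)"
    proof
      fix y assume "y \<in> set Y \<times> D"
      then obtain q e where qe: "y = (q, e)" "q \<in> set Y" "e \<in> D" by auto
      obtain k where k: "q - 1/2 = of_int k" using Y qe by (auto elim: Ints_cases)
      have fq: "\<lfloor>q\<rfloor> = k"
      proof -
        have "q = of_int k + 1/2" using k by simp
        then show ?thesis by (simp add: floor_eq_iff)
      qed
      show "y \<in> \<tau> ` (F \<times> D)"
      proof (cases "e = 1")
        case True
        have "(k + 1, -1) \<in> F \<times> D" using qe fq unfolding F_def D_def by force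
        moreover have "\<tau> (k+1, -1) = y" unfolding \<tau>_def qe True using k by (simp add: field_simps)
        ultimately show ?thesis by force
      next
        case False
        then have e: "e = -1" using qe D_def by auto
        have "(k, 1) \<in> F \<times> D" using qe fq unfolding F_def D_def by force
        moreover have "\<tau> (k, 1) = y" unfolding \<tau>_def qe e using k by (simp add: field_simps)
        ultimately show ?thesis by force
      qed
    qed
    show "\<forall>y\<in>\<tau> ` (F \<times> D) - set Y \<times> D. T' (fst y) (snd y) = 0"
    proof
      fix y assume y: "y \<in> \<tau> ` (F \<times> D) - set Y \<times> D"
      then have "snd y \<in> D" unfolding \<tau>_def D_def by auto
      then have "fst y \<notin> set Y" using y by (cases y) auto
      then have "map (\<lambda>w. if w = fst y then reflected_jump a b (fst y) (snd y) else w) Y = Y"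
        by (intro map_idI) auto
      then show "T' (fst y) (snd y) = 0" unfolding T'_def by simp
    qed
  qed
  also have "\<dots> = (\<Sum>q\<in>set Y. \<Sum>e\<in>D. T' q e)"
    by (simp add: sum.cartesian_product case_prod_beta)
  finally show ?thesis unfolding T_def T'_def D_def .
qed




lemma sum_sub_const:
  "(\<Sum>i\<in>{0..<m}. \<Sum>d\<in>{-1,1::int}. (f i d :: real) - c) = (\<Sum>i\<in>{0..<m}. \<Sum>d\<in>{-1,1::int}. f i d) - 2 * real m * c"
  by (simp add: sum_subtractf sum.distrib)

lemma lazy_dual:
  fixes X :: "int list" and Y :: "real list"
  assumes Y: "\<forall>y\<in>set Y. y - 1/2 \<in> \<int>"
    and L: "L = real (length X + length Y + 1)"
  shows "map_pmf (\<lambda>X'. interval_array X' Y) (lazy (real (length X) / L) (crw_step (absorbed_jump a b)) X)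
       = map_pmf (\<lambda>Y'. interval_array X Y') (lazy (real (length Y) / L) (crw_step (reflected_jump a b)) Y)"
proof (rule pmf_eqI)
  fix z
  define m where "m = length X"
  define n where "n = length Y"
  define g where "g = (\<lambda>X' Y'. indicator {z} (interval_array X' Y') :: real)"
  define c where "c = g X Y"
  define SX where "SX = (\<Sum>i\<in>{0..<m}. \<Sum>d\<in>{-1,1::int}. g (stp (absorbed_jump a b) i d X) Y)"
  define SY where "SY = (\<Sum>i\<in>{0..<n}. \<Sum>d\<in>{-1,1::int}. g X (stp (reflected_jump a b) i d Y))"
  have Lpos: "0 < L" using L by simp
  have p1: "0 \<le> real m / L" "real m / L \<le> 1" using L Lpos unfolding m_def by (auto simp: field_simps)
  have p2: "0 \<le> real n / L" "real n / L \<le> 1" using L Lpos unfolding n_def by (auto simp: field_simps)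
  have PX: "real m * pmf (map_pmf (\<lambda>X'. interval_array X' Y) (crw_step (absorbed_jump a b) X)) z = SX / 2"
    unfolding m_def SX_def g_def by (rule pmf_crw_step)
  have PY: "real n * pmf (map_pmf (\<lambda>Y'. interval_array X Y') (crw_step (reflected_jump a b) Y)) z = SY / 2"
    unfolding n_def SY_def g_def by (rule pmf_crw_step)
  have "SX - 2 * real m * c = (\<Sum>i\<in>{0..<m}. \<Sum>d\<in>{-1,1::int}. g (stp (absorbed_jump a b) i d X) Y - g X Y)"
    unfolding SX_def c_def by (rule sum_sub_const[symmetric])
  also have "\<dots> = (\<Sum>p\<in>set X. \<Sum>d\<in>{-1,1::int}. g (map (\<lambda>w. if w = p then absorbed_jump a b p d else w) X) Y - g X Y)"
    unfolding m_def by (rule step_sum[where g = "\<lambda>X'. g X' Y"])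
  also have "\<dots> = (\<Sum>q\<in>set Y. \<Sum>e\<in>{-1,1::int}. g X (map (\<lambda>w. if w = q then reflected_jump a b q e else w) Y) - g X Y)"
    by (rule comb[OF Y g_def])
  also have "\<dots> = (\<Sum>i\<in>{0..<n}. \<Sum>d\<in>{-1,1::int}. g X (stp (reflected_jump a b) i d Y) - g X Y)"
    unfolding n_def by (rule step_sum[where g = "\<lambda>Y'. g X Y'", symmetric])
  also have "\<dots> = SY - 2 * real n * c"
    unfolding SY_def c_def by (rule sum_sub_const)
  finally have key: "SX - 2 * real m * c = SY - 2 * real n * c" .
  have cX: "indicator {z} (interval_array X Y) = c" unfolding c_def g_def by simp
  have "pmf (map_pmf (\<lambda>X'. interval_array X' Y) (lazy (real (length X) / L) (crw_step (absorbed_jump a b)) X)) z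
      = (real m * pmf (map_pmf (\<lambda>X'. interval_array X' Y) (crw_step (absorbed_jump a b) X)) z) / L + (1 - real m / L) * c"
    using p1 unfolding m_def[symmetric] by (simp add: pmf_lazy cX)
  also have "\<dots> = (SX - 2 * real m * c) / (2 * L) + c" unfolding PX using Lpos by (simp add: field_simps)
  also have "\<dots> = (SY - 2 * real n * c) / (2 * L) + c" by (simp add: key)
  also have "\<dots> = (real n * pmf (map_pmf (\<lambda>Y'. interval_array X Y') (crw_step (reflected_jump a b) Y)) z) / L + (1 - real n / L) * c"
    unfolding PY using Lpos by (simp add: field_simps)
  also have "\<dots> = pmf (map_pmf (\<lambda>Y'. interval_array X Y') (lazy (real (length Y) / L) (crw_step (reflected_jump a b)) Y)) z"
    using p2 unfolding n_def[symmetric] by (simp add: pmf_lazy cX)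
  finally show "pmf (map_pmf (\<lambda>X'. interval_array X' Y) (lazy (real (length X) / L) (crw_step (absorbed_jump a b)) X)) z
      = pmf (map_pmf (\<lambda>Y'. interval_array X Y') (lazy (real (length Y) / L) (crw_step (reflected_jump a b)) Y)) z" .
qed




lemma set_lazy: "set_pmf (lazy p K x) \<subseteq> set_pmf (K x) \<union> {x}"
  by (auto simp: lazy_def set_bind_pmf split: if_splits)

lemma set_crw:
  assumes P: "\<And>y d. P y \<Longrightarrow> P (jump y d)" and X: "\<forall>z\<in>set X. P z"
    and X': "X' \<in> set_pmf (crw_step jump X)"
  shows "length X' = length X \<and> (\<forall>z\<in>set X'. P z)"
proof (cases "X = []")
  case True then show ?thesis using X' by (simp add: crw_step_def)
next
  case False
  then obtain i d where i: "i < length X"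
    and X'e: "X' = (if cluster_leader X i then move_cluster X i (jump (X ! i) d) else X)"
    using X' by (auto simp: crw_step_def set_bind_pmf)
  have "P (X ! i)" using X i by auto
  then have "P (jump (X ! i) d)" by (rule P)
  then show ?thesis using X X'e by (auto simp: move_cluster_def)
qed

lemma set_crw':
  "X' \<in> set_pmf (crw_step jump X) \<Longrightarrow> (\<And>y d. P y \<Longrightarrow> P (jump y d)) \<Longrightarrow> \<forall>z\<in>set X. P z
    \<Longrightarrow> length X' = length X \<and> (\<forall>z\<in>set X'. P z)"
  by (rule set_crw)

lemma rj_half_int: "y - 1/2 \<in> \<int> \<Longrightarrow> reflected_jump a b y d - 1/2 \<in> \<int>"
proof -
  assume y: "y - 1/2 \<in> \<int>"
  have "y + of_int d - 1/2 = (y - 1/2) + of_int d" by simp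
  also have "\<dots> \<in> \<int>" using y by (intro Ints_add) auto
  finally show ?thesis using y by (auto simp: reflected_jump_def Let_def)
qed



theorem proposition3p1:
  fixes a b :: int and xs :: "int list" and ys :: "real list" and t :: real
  assumes "a < b"
    and "sorted xs"
    and "sorted ys"
    and "\<forall>y\<in>set ys. y - 1/2 \<in> \<int>"
    and "0 \<le> t"
  shows "map_pmf (\<lambda>X. interval_array X ys) (absorbed_crw_law a b t xs)
       = map_pmf (\<lambda>Y. interval_array xs Y) (reflected_crw_law a b t ys)"
proof -
  define m where "m = length xs"
  define n where "n = length ys"
  define L where "L = real (m + n + 1)"
  define K1 where "K1 = lazy (real m / L) (crw_step (absorbed_jump a b))"
  define K2 where "K2 = lazy (real n / L) (crw_step (reflected_jump a b))"
  define S1 where "S1 = {X :: int list. length X = m}"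
  define S2 where "S2 = {Y :: real list. length Y = n \<and> (\<forall>y\<in>set Y. y - 1/2 \<in> \<int>)}"
  have Lpos: "0 < L" unfolding L_def by simp
  have e1: "absorbed_crw_law a b t xs = uniformized_law L K1 t xs"
  proof -
    have "absorbed_crw_law a b t xs = uniformized_law (real m) (crw_step (absorbed_jump a b)) t xs"
      by (simp add: absorbed_crw_law_def crw_law_def m_def)
    also have "\<dots> = uniformized_law L K1 t xs"
      unfolding K1_def by (rule unif_thin) (use Lpos assms(5) in \<open>simp_all add: L_def\<close>)
    finally show ?thesis .
  qed
  have e2: "reflected_crw_law a b t ys = uniformized_law L K2 t ys"
  proof -
    have "reflected_crw_law a b t ys = uniformized_law (real n) (crw_step (reflected_jump a b)) t ys"
      by (simp add: reflected_crw_law_def crw_law_def n_def)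
    also have "\<dots> = uniformized_law L K2 t ys"
      unfolding K2_def by (rule unif_thin) (use Lpos assms(5) in \<open>simp_all add: L_def\<close>)
    finally show ?thesis .
  qed
  have inv1: "set_pmf (K1 x) \<subseteq> S1" if "x \<in> S1" for x
  proof
    fix x' assume "x' \<in> set_pmf (K1 x)"
    then have "x' \<in> set_pmf (crw_step (absorbed_jump a b) x) \<union> {x}"
      unfolding K1_def by (rule subsetD[OF set_lazy])
    then have "x' \<in> set_pmf (crw_step (absorbed_jump a b) x) \<or> x' = x" by (simp only: Un_iff singleton_iff)
    then show "x' \<in> S1"
    proof
      assume "x' \<in> set_pmf (crw_step (absorbed_jump a b) x)"
      then have "length x' = length x \<and> (\<forall>z\<in>set x'. True)"
        by (rule set_crw'[where P = "\<lambda>_. True"]) auto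
      then show ?thesis using that unfolding S1_def by simp
    qed (use that in simp)
  qed
  have inv2: "set_pmf (K2 y) \<subseteq> S2" if "y \<in> S2" for y
  proof
    fix y' assume "y' \<in> set_pmf (K2 y)"
    then have "y' \<in> set_pmf (crw_step (reflected_jump a b) y) \<union> {y}"
      unfolding K2_def by (rule subsetD[OF set_lazy])
    then have "y' \<in> set_pmf (crw_step (reflected_jump a b) y) \<or> y' = y" by (simp only: Un_iff singleton_iff)
    then show "y' \<in> S2"
    proof
      assume "y' \<in> set_pmf (crw_step (reflected_jump a b) y)"
      then have "length y' = length y \<and> (\<forall>z\<in>set y'. z - 1/2 \<in> \<int>)"
        by (rule set_crw'[where P = "\<lambda>y. y - 1/2 \<in> \<int>"]) (use rj_half_int that in \<open>auto simp: S2_def\<close>)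
      then show ?thesis using that unfolding S2_def by simp
    qed (use that in simp)
  qed
  have dual: "map_pmf (\<lambda>x'. interval_array x' y) (K1 x) = map_pmf (\<lambda>y'. interval_array x y') (K2 y)"
    if "x \<in> S1" "y \<in> S2" for x y
  proof -
    have lx: "length x = m" and ly: "length y = n" and hy: "\<forall>y\<in>set y. y - 1/2 \<in> \<int>"
      using that unfolding S1_def S2_def by simp_all
    have "L = real (length x + length y + 1)" by (simp only: L_def lx ly)
    from lazy_dual[OF hy this, of a b] show ?thesis unfolding K1_def K2_def lx ly .
  qed
  have "map_pmf (\<lambda>x'. interval_array x' ys) (uniformized_law L K1 t xs)
      = map_pmf (\<lambda>y'. interval_array xs y') (uniformized_law L K2 t ys)"
      proof (rule unif_duality[of S1 K1 S2 K2])
    show "xs \<in> S1" unfolding S1_def m_def by simp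
    show "ys \<in> S2" unfolding S2_def n_def using assms(4) by simp
  qed (fact inv1 inv2 dual)+
  then show ?thesis unfolding e1 e2 .
qed


end
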